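(* Consider an instance of Solitaire Hanabi with a single color ($c=1$), values $1,\dots,n$, hand size $h$, and deck $\sigma=(a_1,\dots,a_N)$ (listing the values of the cards). Call the $i$-th card useless if there exist integers $w_1,\dots,w_{h+1}$ with $a_i<w_1<\dots<w_{h+1}\le n$ such that $a_j\notin\{w_1,\dots,w_{h+1}\}$ for all $j\in\{i+1,\dots,N\}$. Then no winning play sequence plays a useless card.
   Context: Solitaire Hanabi: a card is a pair $(a,k)$ with value $a\in\{1,\dots,n\}$ and color $k\in\{1,\dots,c\}$. The deck is a fully known sequence of $N$ cards drawn one by one in order, starting with an empty hand. When a card is drawn the player may discard it (gone forever), store it in hand, or play it immediately; at no time may more than $h$ cards be stored in hand. A card $(a,k)$ may be played iff either $a=1$ and no card of color $k$ has been played, or the last card of color $k$ played has value $a-1$. After playing a card, the player may also play stored cards obeying the same rule. A winning play sequence is one that plays (one copy of) every card $(a,k)$, $1\le a\le n$, $1\le k\le c$. *)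

theory Defs
  imports Main
begin

text \<open>The deck is a list of values (card i is deck ! i,
  0-indexed). A game state is (H, top, P): H = set of deck indices currently stored in hand,
  top = value of the last card played (0 if none has been played yet), P = list of deck
  indices played so far, in order of play.\<close>

type_synonym hstate = "nat set \<times> nat \<times> nat list"

inductive stored_plays :: "nat list \<Rightarrow> hstate \<Rightarrow> hstate \<Rightarrow> bool" for deck where
  stop: "stored_plays deck s s"
| play: "j \<in> H \<Longrightarrow> deck ! j = t + 1 \<Longrightarrow>
         stored_plays deck (H - {j}, deck ! j, P @ [j]) s' \<Longrightarrow>
         stored_plays deck (H, t, P) s'"

inductive reach :: "nat list \<Rightarrow> nat \<Rightarrow> nat \<Rightarrow> hstate \<Rightarrow> bool" for deck h where
  start: "reach deck h 0 ({}, 0, [])"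
| discard: "reach deck h k (H, t, P) \<Longrightarrow> k < length deck \<Longrightarrow>
            reach deck h (Suc k) (H, t, P)"
| store: "reach deck h k (H, t, P) \<Longrightarrow> k < length deck \<Longrightarrow> card H + 1 \<le> h \<Longrightarrow>
          reach deck h (Suc k) (insert k H, t, P)"
| play: "reach deck h k (H, t, P) \<Longrightarrow> k < length deck \<Longrightarrow> deck ! k = t + 1 \<Longrightarrow>
         stored_plays deck (H, deck ! k, P @ [k]) s \<Longrightarrow>
         reach deck h (Suc k) s"

definition winning :: "nat list \<Rightarrow> nat \<Rightarrow> nat \<Rightarrow> nat list \<Rightarrow> bool" where
  "winning deck n h P \<longleftrightarrow>
     (\<exists>H t. reach deck h (length deck) (H, t, P)) \<and> {1..n} \<subseteq> (\<lambda>j. deck ! j) ` set P"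

definition useless :: "nat list \<Rightarrow> nat \<Rightarrow> nat \<Rightarrow> nat \<Rightarrow> bool" where
  "useless deck n h i \<longleftrightarrow>
     (\<exists>ws :: nat list. length ws = h + 1 \<and> sorted_wrt (<) ws \<and>
        (\<forall>w \<in> set ws. deck ! i < w \<and> w \<le> n) \<and>
        (\<forall>j. i < j \<and> j < length deck \<longrightarrow> deck ! j \<notin> set ws))"

end

theory Submission
  imports Defs
begin

definition SS :: "nat set \<Rightarrow> nat list \<Rightarrow> nat \<Rightarrow> nat set" where
  "SS H P p = {P!q | q. p<q \<and> q<length P \<and> P!q < P!p} \<union> {j\<in>H. j<P!p}"

definition inv :: "nat list \<Rightarrow> nat \<Rightarrow> nat \<Rightarrow> hstate \<Rightarrow> bool" where
  "inv deck h k s = (case s of (H,t,P) \<Rightarrow>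
     finite H \<and> card H \<le> h \<and> H \<subseteq> {..<k} \<and> set P \<subseteq> {..<k} \<and> length P = t \<and>
     (\<forall>q<length P. deck!(P!q) = Suc q) \<and> (\<forall>p<length P. card (SS H P p) \<le> h))"

lemma SS_fin: "finite H \<Longrightarrow> finite (SS H P p)"
proof -
  assume "finite H"
  have "SS H P p \<subseteq> set P \<union> H" unfolding SS_def by auto
  thus ?thesis using \<open>finite H\<close> by (meson finite_Un finite_set finite_subset)
qed

lemma SS_append_sub:
  assumes "p < length P" "x \<in> H' \<or> \<not> x < P!p" "H \<subseteq> H'"
  shows "SS H (P@[x]) p \<subseteq> SS H' P p"
proof
  fix y assume "y \<in> SS H (P@[x]) p"
  then show "y \<in> SS H' P p" unfolding SS_def using assms
    by (auto simp: nth_append split: if_splits)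
qed

lemma SS_last: "SS H (P@[x]) (length P) \<subseteq> H"
  unfolding SS_def by (auto simp: nth_append)

lemma card_le_trans: "A \<subseteq> B \<Longrightarrow> finite B \<Longrightarrow> card B \<le> h \<Longrightarrow> card A \<le> h"
  using card_mono le_trans by blast

lemma stored_inv:
  "stored_plays deck s s' \<Longrightarrow> inv deck h K s \<Longrightarrow> inv deck h K s'"
proof (induction rule: stored_plays.induct)
  case (stop s) then show ?case .
next
  case (play j H t P s')
  have I: "finite H" "card H \<le> h" "H \<subseteq> {..<K}" "set P \<subseteq> {..<K}" "length P = t"
    "\<forall>q<length P. deck!(P!q) = Suc q" "\<forall>p<length P. card (SS H P p) \<le> h"
    using play.prems unfolding inv_def by auto
  have "inv deck h K (H - {j}, deck ! j, P @ [j])"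
  proof -
    have "card (H - {j}) \<le> h" using I(1,2) by (meson card_Diff1_le le_trans)
    moreover have "H - {j} \<subseteq> {..<K}" using I(3) by auto
    moreover have "j < K" using I(3) play.hyps(1) by auto
    moreover have "finite (H - {j})" using I(1) by simp
    moreover have "\<forall>q<Suc (length P). deck ! ((P @ [j]) ! q) = Suc q"
      using I(5,6) play.hyps(2) by (auto simp: nth_append less_Suc_eq)
    moreover have "\<forall>p<Suc (length P). card (SS (H - {j}) (P @ [j]) p) \<le> h"
    proof (intro allI impI)
      fix p assume "p < Suc (length P)"
      then consider "p < length P" | "p = length P" by linarith
      then show "card (SS (H - {j}) (P @ [j]) p) \<le> h"
      proof cases
        case 1
        have "SS (H - {j}) (P @ [j]) p \<subseteq> SS H P p"
          by (rule SS_append_sub) (use 1 play.hyps(1) in auto)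
        then show ?thesis using I(1,7) 1 SS_fin card_le_trans by blast
      next
        case 2
        have "SS (H - {j}) (P @ [j]) p \<subseteq> H" using SS_last[of "H-{j}" P j] 2 by auto
        then show ?thesis using I(1,2) card_le_trans by blast
      qed
    qed
    ultimately show ?thesis using I unfolding inv_def by auto
  qed
  then show ?case using play.IH by blast
qed

lemma reach_inv: "reach deck h k s \<Longrightarrow> inv deck h k s"
proof (induction rule: reach.induct)
  case start then show ?case unfolding inv_def by simp
next
  case (discard k H t P) then show ?case unfolding inv_def by auto
next
  case (store k H t P)
  have I: "finite H" "card H \<le> h" "H \<subseteq> {..<k}" "set P \<subseteq> {..<k}" "length P = t"
    "\<forall>q<length P. deck!(P!q) = Suc q" "\<forall>p<length P. card (SS H P p) \<le> h"
    using store.IH unfolding inv_def by auto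
  have "card (insert k H) \<le> h" using I(1) store.hyps(3)
    by (simp add: card_insert_if)
  moreover have "\<forall>p<length P. card (SS (insert k H) P p) \<le> h"
  proof (intro allI impI)
    fix p assume p: "p < length P"
    have "P!p < k" using I(4) p nth_mem by blast
    hence "SS (insert k H) P p = SS H P p" unfolding SS_def by auto
    then show "card (SS (insert k H) P p) \<le> h" using I(7) p by simp
  qed
  moreover have "H \<subseteq> {..<Suc k}" "set P \<subseteq> {..<Suc k}" using I(3,4) by auto
  ultimately show ?case using I store.hyps unfolding inv_def by simp
next
  case (play k H t P s)
  have I: "finite H" "card H \<le> h" "H \<subseteq> {..<k}" "set P \<subseteq> {..<k}" "length P = t"
    "\<forall>q<length P. deck!(P!q) = Suc q" "\<forall>p<length P. card (SS H P p) \<le> h"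
    using play.IH unfolding inv_def by auto
  have "inv deck h (Suc k) (H, deck ! k, P @ [k])"
  proof -
    have "H \<subseteq> {..<Suc k}" using I(3) by auto
    moreover have "set P \<subseteq> {..<Suc k}" using I(4) by auto
    moreover have "\<forall>q<Suc (length P). deck ! ((P @ [k]) ! q) = Suc q"
      using I(5,6) play.hyps(3) by (auto simp: nth_append less_Suc_eq)
    moreover have "\<forall>p<Suc (length P). card (SS H (P @ [k]) p) \<le> h"
    proof (intro allI impI)
      fix p assume "p < Suc (length P)"
      then consider "p < length P" | "p = length P" by linarith
      then show "card (SS H (P @ [k]) p) \<le> h"
      proof cases
        case 1
        have "P!p < k" using I(4) 1 nth_mem by blast
        have "SS H (P @ [k]) p \<subseteq> SS H P p"
          by (rule SS_append_sub) (use 1 \<open>P!p < k\<close> in auto)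
        then show ?thesis using I(1,7) 1 SS_fin card_le_trans by blast
      next
        case 2
        have "SS H (P @ [k]) p \<subseteq> H" using SS_last[of H P k] 2 by auto
        then show ?thesis using I(1,2) card_le_trans by blast
      qed
    qed
    ultimately show ?thesis using I play.hyps(3) unfolding inv_def by simp
  qed
  then show ?case using stored_inv play.hyps(4) by blast
qed

theorem mainTheorem2:
  fixes deck :: "nat list" and n h i :: nat and P :: "nat list"
  assumes "\<forall>a \<in> set deck. 1 \<le> a \<and> a \<le> n"
    and "i < length deck"
    and "useless deck n h i"
    and "winning deck n h P"
  shows "i \<notin> set P"
proof
  assume iP: "i \<in> set P"
  obtain H t where R: "reach deck h (length deck) (H, t, P)"
    and cov: "{1..n} \<subseteq> (\<lambda>j. deck ! j) ` set P"
    using assms(4) unfolding winning_def by auto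
  have I: "finite H" "set P \<subseteq> {..<length deck}"
    "\<forall>q<length P. deck!(P!q) = Suc q" "\<forall>p<length P. card (SS H P p) \<le> h"
    using reach_inv[OF R] unfolding inv_def by auto
  obtain ws where ws: "length ws = h + 1" "sorted_wrt (<) ws"
    "\<forall>w \<in> set ws. deck ! i < w \<and> w \<le> n"
    "\<forall>j. i < j \<and> j < length deck \<longrightarrow> deck ! j \<notin> set ws"
    using assms(3) unfolding useless_def by auto
  obtain m where m: "m < length P" "P!m = i" using iP by (meson in_set_conv_nth)
  have dm: "deck ! i = Suc m" using I(3) m by auto
  have "set ws \<subseteq> (\<lambda>j. deck ! j) ` SS H P m"
  proof
    fix w assume w: "w \<in> set ws"
    then have "w \<in> {1..n}" using ws(3) by auto
    then obtain j where j: "j \<in> set P" "deck ! j = w" using cov by auto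
    obtain q where q: "q < length P" "P!q = j" using j(1) by (meson in_set_conv_nth)
    have "deck ! j = Suc q" using I(3) q by auto
    hence "m < q" using ws(3) w j(2) dm by auto
    have "j < length deck" using I(2) j(1) by auto
    have "j \<noteq> i" using ws(3) w j(2) by auto
    moreover have "\<not> i < j" using ws(4) \<open>j < length deck\<close> j(2) w by auto
    ultimately have "j < i" by auto
    hence "j \<in> SS H P m" unfolding SS_def using q \<open>m < q\<close> m(2) by auto
    then show "w \<in> (\<lambda>j. deck ! j) ` SS H P m" using j(2) by auto
  qed
  moreover have "card (set ws) = h + 1"
    using ws(1,2) distinct_card strict_sorted_iff by metis
  ultimately have "h + 1 \<le> card ((\<lambda>j. deck ! j) ` SS H P m)"
    using SS_fin[OF I(1)] by (metis card_mono finite_imageI)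
  also have "\<dots> \<le> card (SS H P m)" using card_image_le SS_fin[OF I(1)] by blast
  also have "\<dots> \<le> h" using I(4) m(1) by auto
  finally show False by simp
qed

end
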